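(* In the algebra $\mathcal O_q$ defined in the context, the following relations hold: $[\mathcal W_0,\tilde{\mathcal G}_1]=[\mathcal W_0,[\mathcal W_0,\mathcal W_1]_q]$ and $[\tilde{\mathcal G}_1,\mathcal W_1]=[[\mathcal W_0,\mathcal W_1]_q,\mathcal W_1]$.
   Context: All algebras are associative and unital over a field $\mathbb F$; $q\in\mathbb F$ is nonzero and not a root of unity. For elements $X,Y$ of an algebra, $[X,Y]=XY-YX$ and $[X,Y]_q=qXY-q^{-1}YX$. Let $\rho=-(q^2-q^{-2})^2$. The algebra $\mathcal O_q$ is defined by generators $\mathcal W_{-k},\mathcal W_{k+1},\mathcal G_{k+1},\tilde{\mathcal G}_{k+1}$ ($k\in\mathbb N$) and the following relations for all $k,\ell\in\mathbb N$: $[\mathcal W_0,\mathcal W_{k+1}]=[\mathcal W_{-k},\mathcal W_1]=(\tilde{\mathcal G}_{k+1}-\mathcal G_{k+1})/(q+q^{-1})$; $[\mathcal W_0,\mathcal G_{k+1}]_q=[\tilde{\mathcal G}_{k+1},\mathcal W_0]_q=\rho\mathcal W_{-k-1}-\rho\mathcal W_{k+1}$; $[\mathcal G_{k+1},\mathcal W_1]_q=[\mathcal W_1,\tilde{\mathcal G}_{k+1}]_q=\rho\mathcal W_{k+2}-\rho\mathcal W_{-k}$; $[\mathcal W_{-k},\mathcal W_{-\ell}]=0$, $[\mathcal W_{k+1},\mathcal W_{\ell+1}]=0$; $[\mathcal W_{-k},\mathcal W_{\ell+1}]+[\mathcal W_{k+1},\mathcal W_{-\ell}]=0$; $[\mathcal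 W_{-k},\mathcal G_{\ell+1}]+[\mathcal G_{k+1},\mathcal W_{-\ell}]=0$; $[\mathcal W_{-k},\tilde{\mathcal G}_{\ell+1}]+[\tilde{\mathcal G}_{k+1},\mathcal W_{-\ell}]=0$; $[\mathcal W_{k+1},\mathcal G_{\ell+1}]+[\mathcal G_{k+1},\mathcal W_{\ell+1}]=0$; $[\mathcal W_{k+1},\tilde{\mathcal G}_{\ell+1}]+[\tilde{\mathcal G}_{k+1},\mathcal W_{\ell+1}]=0$; $[\mathcal G_{k+1},\mathcal G_{\ell+1}]=0$, $[\tilde{\mathcal G}_{k+1},\tilde{\mathcal G}_{\ell+1}]=0$; $[\tilde{\mathcal G}_{k+1},\mathcal G_{\ell+1}]+[\mathcal G_{k+1},\tilde{\mathcal G}_{\ell+1}]=0$. *)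

theory Defs
  imports Main
begin

text \<open>A unital associative algebra over a field 'k is modelled as a ring 'a together
with a unital ring homomorphism emb from 'k into the centre of 'a (scalar
multiplication c.x is emb c * x).\<close>

definition algebra_emb :: "('k::field \<Rightarrow> 'a::ring_1) \<Rightarrow> bool" where
  "algebra_emb emb \<longleftrightarrow> emb 1 = 1 \<and> (\<forall>a b. emb (a + b) = emb a + emb b)
     \<and> (\<forall>a b. emb (a * b) = emb a * emb b) \<and> (\<forall>a x. emb a * x = x * emb a)"

definition comm :: "'a::ring \<Rightarrow> 'a \<Rightarrow> 'a" where
  "comm X Y = X * Y - Y * X"

definition qcomm :: "('k::field \<Rightarrow> 'a::ring_1) \<Rightarrow> 'k \<Rightarrow> 'a \<Rightarrow> 'a \<Rightarrow> 'a" where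
  "qcomm emb q X Y = emb q * X * Y - emb (inverse q) * Y * X"

definition not_root_of_unity :: "'k::field \<Rightarrow> bool" where
  "not_root_of_unity q \<longleftrightarrow> q \<noteq> 0 \<and> (\<forall>n::nat. n > 0 \<longrightarrow> q ^ n \<noteq> 1)"

text \<open>Generators: Wm k = W_{-k}, Wp k = W_{k+1}, G k = G_{k+1}, Gt k = tilde G_{k+1}.
  Oq_rel states that these elements satisfy all defining relations of O_q.\<close>

definition Oq_rel :: "('k::field \<Rightarrow> 'a::ring_1) \<Rightarrow> 'k \<Rightarrow>
    (nat \<Rightarrow> 'a) \<Rightarrow> (nat \<Rightarrow> 'a) \<Rightarrow> (nat \<Rightarrow> 'a) \<Rightarrow> (nat \<Rightarrow> 'a) \<Rightarrow> bool" where
  "Oq_rel emb q Wm Wp G Gt \<longleftrightarrow>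
    (let \<rho> = - ((q\<^sup>2 - inverse (q\<^sup>2))\<^sup>2) in
    (\<forall>k. comm (Wm 0) (Wp k) = emb (inverse (q + inverse q)) * (Gt k - G k)) \<and>
    (\<forall>k. comm (Wm k) (Wp 0) = emb (inverse (q + inverse q)) * (Gt k - G k)) \<and>
    (\<forall>k. qcomm emb q (Wm 0) (G k) = emb \<rho> * Wm (Suc k) - emb \<rho> * Wp k) \<and>
    (\<forall>k. qcomm emb q (Gt k) (Wm 0) = emb \<rho> * Wm (Suc k) - emb \<rho> * Wp k) \<and>
    (\<forall>k. qcomm emb q (G k) (Wp 0) = emb \<rho> * Wp (Suc k) - emb \<rho> * Wm k) \<and>
    (\<forall>k. qcomm emb q (Wp 0) (Gt k) = emb \<rho> * Wp (Suc k) - emb \<rho> * Wm k) \<and>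
    (\<forall>k l. comm (Wm k) (Wm l) = 0) \<and>
    (\<forall>k l. comm (Wp k) (Wp l) = 0) \<and>
    (\<forall>k l. comm (Wm k) (Wp l) + comm (Wp k) (Wm l) = 0) \<and>
    (\<forall>k l. comm (Wm k) (G l) + comm (G k) (Wm l) = 0) \<and>
    (\<forall>k l. comm (Wm k) (Gt l) + comm (Gt k) (Wm l) = 0) \<and>
    (\<forall>k l. comm (Wp k) (G l) + comm (G k) (Wp l) = 0) \<and>
    (\<forall>k l. comm (Wp k) (Gt l) + comm (Gt k) (Wp l) = 0) \<and>
    (\<forall>k l. comm (G k) (G l) = 0) \<and>
    (\<forall>k l. comm (Gt k) (Gt l) = 0) \<and>
    (\<forall>k l. comm (Gt k) (G l) + comm (G k) (Gt l) = 0))"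

end

theory Submission
  imports Defs
begin

lemma core:
  fixes a b C W0 W1 Gt G :: "'a::ring_1"
  assumes ca: "\<And>x. x * a = a * x" and cb: "\<And>x. x * b = b * x"
    and C: "C = a + b"
    and hG: "G = Gt - C * (W0*W1 - W1*W0)"
    and e1: "a*W0*G - b*G*W0 = a*Gt*W0 - b*W0*Gt"
    and e2: "a*G*W1 - b*W1*G = a*W1*Gt - b*Gt*W1"
  shows "C * (W0*Gt - Gt*W0) = C * (W0*(a*W0*W1 - b*W1*W0) - (a*W0*W1 - b*W1*W0)*W0)"
    and "C * (Gt*W1 - W1*Gt) = C * ((a*W0*W1 - b*W1*W0)*W1 - W1*(a*W0*W1 - b*W1*W0))"
proof -
  have r: "W0 * a = a * W0" "W1 * a = a * W1" "Gt * a = a * Gt" "b * a = a * b"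
     "W0 * b = b * W0" "W1 * b = b * W1" "Gt * b = b * Gt"
    by (rule ca cb)+
  have r2: "W0 * (a*y) = a * (W0*y)" "W1 * (a*y) = a * (W1*y)" "Gt * (a*y) = a * (Gt*y)" "b * (a*y) = a * (b*y)"
     "W0 * (b*y) = b * (W0*y)" "W1 * (b*y) = b * (W1*y)" "Gt * (b*y) = b * (Gt*y)" for y
    using r by (simp_all add: mult.assoc[symmetric])
  define D where "D = W0*W1 - W1*W0"
  have s1: "W0*(a*W0*W1 - b*W1*W0) - (a*W0*W1 - b*W1*W0)*W0 = a*(W0*D) - b*(D*W0)"
    unfolding D_def by (simp add: algebra_simps r r2)
  have s2: "(a*W0*W1 - b*W1*W0)*W1 - W1*(a*W0*W1 - b*W1*W0) = a*(D*W1) - b*(W1*D)"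
    unfolding D_def by (simp add: algebra_simps r r2)
  have CD: "C * X = X * C" for X unfolding C by (simp only: distrib_left distrib_right ca[of X] cb[of X])
  have t1: "(a*W0*G - b*G*W0) - (a*Gt*W0 - b*W0*Gt) = C * (W0*Gt - Gt*W0) - C * (a*(W0*D) - b*(D*W0))"
  proof -
    have cd: "W0*(C*D) = C*(W0*D)"
    proof -
      have "W0*(C*D) = (W0*C)*D" by (simp only: mult.assoc)
      also have "... = (C*W0)*D" by (simp only: CD[of W0])
      finally show ?thesis by (simp only: mult.assoc)
    qed

    have "a*W0*G - b*G*W0 = a*(W0*Gt) - a*(C*(W0*D)) - b*(Gt*W0) + b*(C*(D*W0))"
      unfolding hG D_def[symmetric] cd[symmetric] by (simp add: algebra_simps)
    then show ?thesis unfolding C by (simp add: algebra_simps r r2)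
  qed
  show "C * (W0*Gt - Gt*W0) = C * (W0*(a*W0*W1 - b*W1*W0) - (a*W0*W1 - b*W1*W0)*W0)"
    using t1 e1 unfolding s1 by simp
  have t2: "(a*W1*Gt - b*Gt*W1) - (a*G*W1 - b*W1*G) = C * (a*(D*W1) - b*(W1*D)) - C * (Gt*W1 - W1*Gt)"
  proof -
    have cd: "W1*(C*D) = C*(W1*D)"
    proof -
      have "W1*(C*D) = (W1*C)*D" by (simp only: mult.assoc)
      also have "... = (C*W1)*D" by (simp only: CD[of W1])
      finally show ?thesis by (simp only: mult.assoc)
    qed

    have "a*G*W1 - b*W1*G = a*(Gt*W1) - a*(C*(D*W1)) - b*(W1*Gt) + b*(C*(W1*D))"
      unfolding hG D_def[symmetric] cd[symmetric] by (simp add: algebra_simps)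
    then show ?thesis unfolding C by (simp add: algebra_simps r r2)
  qed
  show "C * (Gt*W1 - W1*Gt) = C * ((a*W0*W1 - b*W1*W0)*W1 - W1*(a*W0*W1 - b*W1*W0))"
    using t2 e2 unfolding s2 by simp
qed

theorem lemma4p8:
  fixes emb :: "'k::field \<Rightarrow> 'a::ring_1" and q :: 'k
    and Wm Wp G Gt :: "nat \<Rightarrow> 'a"
  assumes "algebra_emb emb"
    and "not_root_of_unity q"
    and "Oq_rel emb q Wm Wp G Gt"
  shows "comm (Wm 0) (Gt 0) = comm (Wm 0) (qcomm emb q (Wm 0) (Wp 0))
    \<and> comm (Gt 0) (Wp 0) = comm (qcomm emb q (Wm 0) (Wp 0)) (Wp 0)"
proof -
  have E1: "emb 1 = 1" and Eadd: "\<And>a b. emb (a + b) = emb a + emb b"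
    and Emul: "\<And>a b. emb (a * b) = emb a * emb b" and Ecomm: "\<And>a x. emb a * x = x * emb a"
    using assms(1) unfolding algebra_emb_def by blast+
  have q0: "q \<noteq> 0" and q4: "q ^ 4 \<noteq> 1" using assms(2) unfolding not_root_of_unity_def by auto
  define c where "c = q + inverse q"
  have c0: "c \<noteq> 0"
  proof
    assume "c = 0"
    then have "1 + q * q = 0" using q0 unfolding c_def by (simp add: field_simps)
    then have "q * q = -1" by (metis add.commute add_eq_0_iff)
    then have "q ^ 4 = 1" 
    proof -
      have "q ^ 4 = (q * q) * (q * q)" by (simp add: power4_eq_xxxx mult.assoc)
      then show ?thesis using \<open>q * q = -1\<close> by simp
    qed
    then show False using q4 by simp
  qed
  define a where "a = emb q"
  define b where "b = emb (inverse q)"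
  define C where "C = emb c"
  have ca: "x * a = a * x" for x unfolding a_def by (rule Ecomm[symmetric])
  have cb: "x * b = b * x" for x unfolding b_def by (rule Ecomm[symmetric])
  have CC: "C = a + b" unfolding C_def a_def b_def c_def by (rule Eadd)
  have inv: "emb (inverse c) * C = 1" "C * emb (inverse c) = 1"
    unfolding C_def using c0 by (simp_all add: Emul[symmetric] E1)
  have canc: "X = Y" if "C * X = C * Y" for X Y
  proof -
    have "emb (inverse c) * (C * X) = emb (inverse c) * (C * Y)" using that by simp
    then show ?thesis by (simp add: mult.assoc[symmetric] inv)
  qed
  note R = assms(3)[unfolded Oq_rel_def Let_def]
  have h1: "comm (Wm 0) (Wp 0) = emb (inverse c) * (Gt 0 - G 0)" using R[THEN conjunct1, rule_format, of 0] unfolding c_def .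
  have "C * comm (Wm 0) (Wp 0) = Gt 0 - G 0" unfolding h1 by (simp add: mult.assoc[symmetric] inv)
  then have hG: "G 0 = Gt 0 - C * (Wm 0 * Wp 0 - Wp 0 * Wm 0)" unfolding comm_def by (simp add: algebra_simps)
  have "qcomm emb q (Wm 0) (G 0) = qcomm emb q (Gt 0) (Wm 0)"
    using R[THEN conjunct2, THEN conjunct2, THEN conjunct1, rule_format, of 0]
      R[THEN conjunct2, THEN conjunct2, THEN conjunct2, THEN conjunct1, rule_format, of 0] by simp
  then have e1: "a*Wm 0*G 0 - b*G 0*Wm 0 = a*Gt 0*Wm 0 - b*Wm 0*Gt 0"
    unfolding qcomm_def a_def b_def .
  have "qcomm emb q (G 0) (Wp 0) = qcomm emb q (Wp 0) (Gt 0)"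
    using R[THEN conjunct2, THEN conjunct2, THEN conjunct2, THEN conjunct2, THEN conjunct1, rule_format, of 0]
      R[THEN conjunct2, THEN conjunct2, THEN conjunct2, THEN conjunct2, THEN conjunct2, THEN conjunct1, rule_format, of 0] by simp
  then have e2: "a*G 0*Wp 0 - b*Wp 0*G 0 = a*Wp 0*Gt 0 - b*Gt 0*Wp 0"
    unfolding qcomm_def a_def b_def .
  have qc: "qcomm emb q (Wm 0) (Wp 0) = a*Wm 0*Wp 0 - b*Wp 0*Wm 0" unfolding qcomm_def a_def b_def ..
  show ?thesis unfolding qc comm_def
  proof
    show "Wm 0 * Gt 0 - Gt 0 * Wm 0 = Wm 0 * (a * Wm 0 * Wp 0 - b * Wp 0 * Wm 0) - (a * Wm 0 * Wp 0 - b * Wp 0 * Wm 0) * Wm 0"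
      by (rule canc, rule core(1)[OF ca cb CC hG e1 e2])
    show "Gt 0 * Wp 0 - Wp 0 * Gt 0 = (a * Wm 0 * Wp 0 - b * Wp 0 * Wm 0) * Wp 0 - Wp 0 * (a * Wm 0 * Wp 0 - b * Wp 0 * Wm 0)"
      by (rule canc, rule core(2)[OF ca cb CC hG e1 e2])
  qed
qed

end
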